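(* Let $G$ be a primitive permutation group of type PA preserving a product structure $\Delta^I$, and let $H\le\mathrm{Sym}(\Delta)$ be such that $G\le H\wr\mathrm{Sym}(I)$ (in product action). If $G$ contains a quasi-semiregular element, then $H$ contains quasi-semiregular elements (on $\Delta$), and every quasi-semiregular element of prime order in $G$ lies in the base group $H^I$.
   Context: A permutation $g$ is quasi-semiregular if $\langle g\rangle$ has a unique fixed point and acts semiregularly (only the identity fixes a point) on the remaining points. Product action of $H\wr\mathrm{Sym}(I)$ on $\Delta^I$: the base group $H^I$ acts coordinatewise and $\mathrm{Sym}(I)$ permutes coordinates. *)

theory Defs
  imports "HOL-Algebra.Algebra"
begin

text \<open>Permutations of a set S are the extensional bijections of S (the carrier of
  BijGroup S).  A permutation group on S is a subgroup G of BijGroup S; as an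
  abstract group it is the structure below.\<close>

definition perm_grp :: "'a set \<Rightarrow> ('a \<Rightarrow> 'a) set \<Rightarrow> ('a \<Rightarrow> 'a) monoid" where
  "perm_grp S G = (BijGroup S)\<lparr>carrier := G\<rparr>"

definition quasi_semiregular :: "'a set \<Rightarrow> ('a \<Rightarrow> 'a) \<Rightarrow> bool" where
  "quasi_semiregular S g \<longleftrightarrow>
     (\<exists>a. (a \<in> S \<and> g a = a) \<and> (\<forall>b. b \<in> S \<and> g b = b \<longrightarrow> b = a)
        \<and> (\<forall>x\<in>S - {a}. \<forall>n::nat. (g ^^ n) x = x \<longrightarrow> (\<forall>y\<in>S. (g ^^ n) y = y)))"

definition transitive_on :: "'a set \<Rightarrow> ('a \<Rightarrow> 'a) set \<Rightarrow> bool" where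
  "transitive_on S G \<longleftrightarrow> S \<noteq> {} \<and> (\<forall>x\<in>S. \<forall>y\<in>S. \<exists>g\<in>G. g x = y)"

definition primitive_on :: "'a set \<Rightarrow> ('a \<Rightarrow> 'a) set \<Rightarrow> bool" where
  "primitive_on S G \<longleftrightarrow> transitive_on S G \<and>
     (\<forall>B. B \<subseteq> S \<and> B \<noteq> {} \<and> (\<forall>g\<in>G. g ` B = B \<or> g ` B \<inter> B = {})
          \<longrightarrow> card B = 1 \<or> B = S)"

definition regular_on :: "'a set \<Rightarrow> ('a \<Rightarrow> 'a) set \<Rightarrow> bool" where
  "regular_on S G \<longleftrightarrow> transitive_on S G \<and>
     (\<forall>g\<in>G. \<forall>x\<in>S. g x = x \<longrightarrow> g = (\<lambda>y\<in>S. y))"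

definition minimal_normal :: "('g, 'b) monoid_scheme \<Rightarrow> 'g set \<Rightarrow> bool" where
  "minimal_normal \<Gamma> N \<longleftrightarrow> N \<lhd> \<Gamma> \<and> N \<noteq> {\<one>\<^bsub>\<Gamma>\<^esub>} \<and>
     (\<forall>M. M \<lhd> \<Gamma> \<and> M \<subseteq> N \<longrightarrow> M = {\<one>\<^bsub>\<Gamma>\<^esub>} \<or> M = N)"

definition socle :: "('g, 'b) monoid_scheme \<Rightarrow> 'g set" where
  "socle \<Gamma> = generate \<Gamma> (\<Union>{N. minimal_normal \<Gamma> N})"

text \<open>Product action of H wr Sym(I) on \<Delta>^I (functions I \<rightarrow> \<Delta>, extensional):
  the element (h, \<sigma>) maps x to y with y (\<sigma> i) = h i (x i).\<close>

definition pa_perm :: "'i set \<Rightarrow> 'a set \<Rightarrow> ('i \<Rightarrow> 'a \<Rightarrow> 'a) \<Rightarrow> ('i \<Rightarrow> 'i)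
    \<Rightarrow> ('i \<Rightarrow> 'a) \<Rightarrow> ('i \<Rightarrow> 'a)" where
  "pa_perm I \<Delta> h \<sigma> = (\<lambda>x \<in> PiE I (\<lambda>_. \<Delta>).
      \<lambda>j \<in> I. h (inv_into I \<sigma> j) (x (inv_into I \<sigma> j)))"

definition wreath_pa :: "'i set \<Rightarrow> 'a set \<Rightarrow> ('a \<Rightarrow> 'a) set \<Rightarrow> (('i \<Rightarrow> 'a) \<Rightarrow> ('i \<Rightarrow> 'a)) set" where
  "wreath_pa I \<Delta> H = {pa_perm I \<Delta> h \<sigma> | h \<sigma>. (\<forall>i\<in>I. h i \<in> H) \<and> \<sigma> \<in> Bij I}"

definition base_group :: "'i set \<Rightarrow> 'a set \<Rightarrow> ('a \<Rightarrow> 'a) set \<Rightarrow> (('i \<Rightarrow> 'a) \<Rightarrow> ('i \<Rightarrow> 'a)) set" where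
  "base_group I \<Delta> H = {pa_perm I \<Delta> h (\<lambda>i\<in>I. i) | h. \<forall>i\<in>I. h i \<in> H}"

definition PA_type :: "'i set \<Rightarrow> 'a set \<Rightarrow> (('i \<Rightarrow> 'a) \<Rightarrow> ('i \<Rightarrow> 'a)) set \<Rightarrow> bool" where
  "PA_type I \<Delta> G \<longleftrightarrow> finite I \<and> finite \<Delta> \<and> card I \<ge> 2 \<and>
     subgroup G (BijGroup (PiE I (\<lambda>_. \<Delta>))) \<and> primitive_on (PiE I (\<lambda>_. \<Delta>)) G \<and>
     (\<exists>K T. subgroup K (BijGroup \<Delta>) \<and> primitive_on \<Delta> K \<and>
        socle (perm_grp \<Delta> K) = T \<and>
        simple_group (perm_grp \<Delta> T) \<and> \<not> comm_group (perm_grp \<Delta> T) \<and>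
        \<not> regular_on \<Delta> T \<and>
        G \<subseteq> wreath_pa I \<Delta> K \<and>
        socle (perm_grp (PiE I (\<lambda>_. \<Delta>)) G) = base_group I \<Delta> T)"

end

theory Submission
  imports Defs
begin

lemma BG_carrier: "carrier (BijGroup S) = Bij S" by (simp add: BijGroup_def)
lemma BG_one: "\<one>\<^bsub>BijGroup S\<^esub> = (\<lambda>x\<in>S. x)" by (simp add: BijGroup_def)
lemma BG_mult: "x \<in> Bij S \<Longrightarrow> y \<in> Bij S \<Longrightarrow> x \<otimes>\<^bsub>BijGroup S\<^esub> y = compose S x y"
  by (simp add: BijGroup_def)

lemma Bij_maps: "f \<in> Bij S \<Longrightarrow> x \<in> S \<Longrightarrow> f x \<in> S"
  by (auto simp: Bij_def bij_betw_def)

lemma Bij_funpow_in: "f \<in> Bij S \<Longrightarrow> x \<in> S \<Longrightarrow> (f ^^ n) x \<in> S"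
proof (induction n)
  case 0 then show ?case by simp
next
  case (Suc n) then show ?case using Bij_maps[of f S "(f ^^ n) x"] by simp
qed

lemma Bij_pow: assumes "f \<in> Bij S"
  shows "f [^]\<^bsub>BijGroup S\<^esub> (n::nat) = (\<lambda>x\<in>S. (f ^^ n) x)"
proof (induction n)
  case 0
  show ?case by (simp only: nat_pow_0 BG_one funpow_0)
next
  case (Suc n)
  interpret group "BijGroup S" by (rule group_BijGroup)
  have m: "\<And>x y. x \<in> Bij S \<Longrightarrow> y \<in> Bij S \<Longrightarrow> x \<otimes>\<^bsub>BijGroup S\<^esub> y = compose S x y"
    by (simp add: BijGroup_def)
  have cB: "carrier (BijGroup S) = Bij S" by (simp add: BijGroup_def)
  have fc: "f \<in> carrier (BijGroup S)" using assms by (simp only: cB)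
  have c: "f [^]\<^bsub>BijGroup S\<^esub> n \<in> Bij S"
    using nat_pow_closed[OF fc, of n] by (simp only: cB)
  have "f [^]\<^bsub>BijGroup S\<^esub> Suc n = f [^]\<^bsub>BijGroup S\<^esub> n \<otimes>\<^bsub>BijGroup S\<^esub> f"
    by (rule nat_pow_Suc)
  also have "\<dots> = compose S (f [^]\<^bsub>BijGroup S\<^esub> n) f"
    by (rule m[OF c assms])
  also have "\<dots> = compose S (\<lambda>x\<in>S. (f ^^ n) x) f"
    by (simp only: Suc.IH)
  also have "\<dots> = (\<lambda>x\<in>S. (f ^^ Suc n) x)"
  proof (rule ext)
    fix x show "compose S (\<lambda>x\<in>S. (f ^^ n) x) f x = (\<lambda>x\<in>S. (f ^^ Suc n) x) x"
      using Bij_maps[OF assms, of x] by (simp add: compose_def funpow_swap1)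
  qed
  finally show ?case .
qed

lemma Bij_finite: "finite S \<Longrightarrow> finite (Bij S)"
proof -
  assume "finite S"
  have "Bij S \<subseteq> PiE S (\<lambda>_. S)"
  proof
    fix f assume f: "f \<in> Bij S"
    have "f \<in> extensional S" by (rule Bij_imp_extensional[OF f])
    moreover have "\<forall>x\<in>S. f x \<in> S" using Bij_maps[OF f] by blast
    ultimately show "f \<in> PiE S (\<lambda>_. S)" by (simp add: PiE_iff)
  qed
  moreover have "finite (PiE S (\<lambda>_. S))" using \<open>finite S\<close> by (simp add: finite_PiE)
  ultimately show ?thesis by (rule finite_subset)
qed

lemma Bij_period: assumes "finite S" "f \<in> Bij S"
  shows "\<exists>M>0. \<forall>x\<in>S. (f ^^ M) x = x"
proof -
  interpret group "BijGroup S" by (rule group_BijGroup)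
  have fc: "finite (carrier (BijGroup S))" using Bij_finite[OF assms(1)] by (simp only: BG_carrier)
  have fin: "f \<in> carrier (BijGroup S)" using assms by (simp only: BG_carrier)
  have "ord f \<ge> 1" using ord_ge_1[OF fc fin] .
  moreover have "f [^]\<^bsub>BijGroup S\<^esub> ord f = (\<lambda>x\<in>S. x)"
    using pow_ord_eq_1[OF fin] by (simp only: BG_one)
  then have "(\<lambda>x\<in>S. (f ^^ ord f) x) = (\<lambda>x\<in>S. x)"
    using Bij_pow[OF assms(2), of "ord f"] by (simp only:)
  then have "\<forall>x\<in>S. (f ^^ ord f) x = x"
    by (metis restrict_apply')
  ultimately show ?thesis by (intro exI[of _ "ord f"]) auto
qed


primrec kp :: "'a set \<Rightarrow> ('i \<Rightarrow> 'a \<Rightarrow> 'a) \<Rightarrow> ('i \<Rightarrow> 'i) \<Rightarrow> 'i \<Rightarrow> nat \<Rightarrow> 'a \<Rightarrow> 'a" where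
  "kp D h s i 0 = (\<lambda>x\<in>D. x)"
| "kp D h s i (Suc n) = compose D (h ((s ^^ n) i)) (kp D h s i n)"

lemma fixpow: "f y = y \<Longrightarrow> (f ^^ n) y = y"
  by (induction n) auto

locale pa_loc =
  fixes I :: "'i set" and D :: "'a set" and h :: "'i \<Rightarrow> 'a \<Rightarrow> 'a" and \<sigma> :: "'i \<Rightarrow> 'i"
    and g :: "('i \<Rightarrow> 'a) \<Rightarrow> ('i \<Rightarrow> 'a)" and a :: "'i \<Rightarrow> 'a" and i0 :: 'i and M :: nat
  assumes sig: "\<sigma> \<in> Bij I"
    and hB: "\<And>i. i \<in> I \<Longrightarrow> h i \<in> Bij D"
    and gdef: "g = pa_perm I D h \<sigma>"
    and gB: "g \<in> Bij (PiE I (\<lambda>_. D))"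
    and aS: "a \<in> PiE I (\<lambda>_. D)" and ga: "g a = a"
    and i0: "i0 \<in> I"
    and Mpos: "M > 0" and Mper: "\<And>x. x \<in> I \<Longrightarrow> (\<sigma> ^^ M) x = x"
begin

abbreviation "S \<equiv> PiE I (\<lambda>_. D)"
abbreviation "K \<equiv> kp D h \<sigma>"

lemma sI: "j \<in> I \<Longrightarrow> (\<sigma>^^n) j \<in> I"
  using Bij_funpow_in[OF sig] .

lemma gS: "w \<in> S \<Longrightarrow> (g^^n) w \<in> S"
  using Bij_funpow_in[OF gB] .

lemma L0: assumes "w \<in> S" "j \<in> I" shows "g w (\<sigma> j) = h j (w j)"
proof -
  have inj: "inj_on \<sigma> I" using sig by (simp add: Bij_def bij_betw_def)
  have "\<sigma> j \<in> I" using Bij_maps[OF sig assms(2)] .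
  moreover have "inv_into I \<sigma> (\<sigma> j) = j" using inv_into_f_f[OF inj assms(2)] .
  ultimately show ?thesis using assms by (simp add: gdef pa_perm_def)
qed

lemma KD: "y \<in> D \<Longrightarrow> j \<in> I \<Longrightarrow> K j n y \<in> D"
  by (induction n) (auto simp: compose_def intro!: Bij_maps[OF hB] sI)

lemma KSuc: "y \<in> D \<Longrightarrow> K j (Suc n) y = h ((\<sigma>^^n) j) (K j n y)"
  by (simp add: compose_def)

lemma L1: assumes "w \<in> S" "j \<in> I" shows "(g^^n) w ((\<sigma>^^n) j) = K j n (w j)"
proof (induction n)
  case 0
  then show ?case using assms by auto
next
  case (Suc n)
  have wj: "w j \<in> D" using assms by auto
  have "(g^^Suc n) w ((\<sigma>^^Suc n) j) = g ((g^^n) w) (\<sigma> ((\<sigma>^^n) j))" by simp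
  also have "\<dots> = h ((\<sigma>^^n) j) ((g^^n) w ((\<sigma>^^n) j))"
    by (rule L0[OF gS[OF assms(1)] sI[OF assms(2)]])
  also have "\<dots> = K j (Suc n) (w j)" using Suc KSuc[OF wj] by simp
  finally show ?case .
qed

lemma KA: assumes "y \<in> D" "j \<in> I" shows "K j (t + m) y = K ((\<sigma>^^t) j) m (K j t y)"
proof (induction m)
  case 0
  then show ?case using KD[OF assms] by simp
next
  case (Suc m)
  have "K j (t + Suc m) y = h ((\<sigma>^^(t+m)) j) (K j (t + m) y)"
    using KSuc[OF assms(1)] by simp
  also have "\<dots> = h ((\<sigma>^^m) ((\<sigma>^^t) j)) (K ((\<sigma>^^t) j) m (K j t y))"
    using Suc by (simp add: funpow_add add.commute)
  also have "\<dots> = K ((\<sigma>^^t) j) (Suc m) (K j t y)"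
    using KSuc[OF KD[OF assms]] by simp
  finally show ?case .
qed

lemma gfix: "(g^^n) a = a"
  using fixpow[of g a n] ga by simp

lemma Mmul: "x \<in> I \<Longrightarrow> (\<sigma>^^(M * q)) x = x"
proof (induction q)
  case 0 then show ?case by simp
next
  case (Suc q)
  have "(\<sigma>^^(M*Suc q)) x = (\<sigma>^^M) ((\<sigma>^^(M * q)) x)" by (simp add: funpow_add)
  then show ?case using Suc Mper by simp
qed

lemma Minv: assumes "x \<in> I" shows "(\<sigma>^^(M * c - c)) ((\<sigma>^^c) x) = x"
proof -
  have "M * c - c + c = M * c" using Mpos by (cases M) auto
  then have "(\<sigma>^^(M * c - c)) ((\<sigma>^^c) x) = (\<sigma>^^(M * c)) x"
    by (metis comp_apply funpow_add)
  then show ?thesis using Mmul[OF assms] by simp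
qed

definition r where "r = (LEAST r. 0 < r \<and> (\<sigma>^^r) i0 = i0)"

lemma r: "0 < r" "(\<sigma>^^r) i0 = i0"
proof -
  have "0 < M \<and> (\<sigma>^^M) i0 = i0" using Mpos Mper i0 by simp
  then have "0 < r \<and> (\<sigma>^^r) i0 = i0" unfolding r_def by (rule LeastI)
  then show "0 < r" "(\<sigma>^^r) i0 = i0" by auto
qed

lemma rmin: "0 < s \<Longrightarrow> s < r \<Longrightarrow> (\<sigma>^^s) i0 \<noteq> i0"
  unfolding r_def using not_less_Least by blast

lemma rmul: "(\<sigma>^^(r*q)) i0 = i0"
  using fixpow[of "\<sigma>^^r" i0 q] r(2) by (simp add: funpow_mult)

lemma rmod: "(\<sigma>^^s) i0 = (\<sigma>^^(s mod r)) i0"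
proof -
  have "s = s mod r + r * (s div r)" by simp
  then have "(\<sigma>^^s) i0 = (\<sigma>^^(s mod r)) ((\<sigma>^^(r * (s div r))) i0)"
    by (metis comp_apply funpow_add)
  then show ?thesis using rmul by simp
qed

lemma rinj0: assumes "s < s'" "s' < r" "(\<sigma>^^s) i0 = (\<sigma>^^s') i0" shows False
proof -
  define d where "d = s' - s"
  have dI: "(\<sigma>^^d) i0 \<in> I" using sI[OF i0] .
  have "(\<sigma>^^s') i0 = (\<sigma>^^s) ((\<sigma>^^d) i0)" using assms(1) unfolding d_def
    by (metis comp_apply funpow_add le_add_diff_inverse less_imp_le)
  then have "(\<sigma>^^d) i0 = (\<sigma>^^(M * s - s)) ((\<sigma>^^s) i0)"
    using Minv[OF dI, of s] assms(3) by simp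
  also have "\<dots> = i0" using Minv[OF i0] .
  finally show False using rmin[of d] assms unfolding d_def by simp
qed

lemma rinj: "s < r \<Longrightarrow> s' < r \<Longrightarrow> (\<sigma>^^s) i0 = (\<sigma>^^s') i0 \<Longrightarrow> s = s'"
  by (metis linorder_neqE_nat rinj0)

lemma rdiv: "(\<sigma>^^s) i0 = i0 \<Longrightarrow> r dvd s"
  using rmod[of s] rmin[of "s mod r"] r(1) by (metis mod_less_divisor dvd_eq_mod_eq_0 gr0I)

lemma kpow: "y \<in> D \<Longrightarrow> K i0 (r*n) y = (K i0 r ^^ n) y"
proof (induction n)
  case 0 then show ?case by simp
next
  case (Suc n)
  have "K i0 (r * Suc n) y = K i0 (r*n + r) y" by (simp add: add.commute)
  also have "\<dots> = K ((\<sigma>^^(r*n)) i0) r (K i0 (r*n) y)" using KA[OF Suc.prems i0] .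
  also have "\<dots> = (K i0 r ^^ Suc n) y" using Suc rmul by simp
  finally show ?case .
qed

lemma kmod: assumes "y \<in> D" "K i0 r y = y" shows "K i0 s y = K i0 (s mod r) y"
proof -
  have "s = r * (s div r) + s mod r" by simp
  then have "K i0 s y = K ((\<sigma>^^(r * (s div r))) i0) (s mod r) (K i0 (r * (s div r)) y)"
    using KA[OF assms(1) i0] by metis
  also have "\<dots> = K i0 (s mod r) y"
    using rmul kpow[OF assms(1)] fixpow[of "K i0 r" y] assms(2) by simp
  finally show ?thesis .
qed

lemma WD: assumes "y \<in> D" "K i0 r y = y" "(\<sigma>^^s) i0 = (\<sigma>^^s') i0"
  shows "K i0 s y = K i0 s' y"
proof -
  have "s mod r = s' mod r"
    using rinj[of "s mod r" "s' mod r"] rmod[of s] rmod[of s'] assms(3) r(1) by simp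
  then show ?thesis using kmod[OF assms(1,2)] by metis
qed

definition Orb where "Orb = range (\<lambda>t. (\<sigma>^^t) i0)"

definition phi where
  "phi y = (\<lambda>j\<in>I. if j \<in> Orb then K i0 (LEAST t. (\<sigma>^^t) i0 = j) y else a j)"

lemma phiS: "y \<in> D \<Longrightarrow> phi y \<in> S"
  using aS KD[OF _ i0] by (auto simp: phi_def PiE_iff)

lemma phiO': assumes "j \<in> Orb" shows "\<exists>t. (\<sigma>^^t) i0 = j \<and> phi y j = K i0 t y"
proof -
  obtain s where s: "(\<sigma>^^s) i0 = j" using assms by (auto simp: Orb_def)
  then have "(\<sigma>^^(LEAST t. (\<sigma>^^t) i0 = j)) i0 = j" by (rule LeastI)
  moreover have "j \<in> I" using s sI[OF i0] by auto
  ultimately show ?thesis using assms by (auto simp: phi_def)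
qed

lemma phiO: assumes "y \<in> D" "K i0 r y = y" "j = (\<sigma>^^s) i0" shows "phi y j = K i0 s y"
proof -
  have "j \<in> Orb" using assms(3) by (auto simp: Orb_def)
  then obtain t where "(\<sigma>^^t) i0 = j" "phi y j = K i0 t y" using phiO' by blast
  then show ?thesis using WD[OF assms(1,2)] assms(3) by metis
qed

lemma phinO: "j \<in> I \<Longrightarrow> j \<notin> Orb \<Longrightarrow> phi y j = a j"
  by (simp add: phi_def)

lemma phi_i0: "y \<in> D \<Longrightarrow> phi y i0 = y"
proof -
  assume y: "y \<in> D"
  have "i0 \<in> Orb" by (auto simp: Orb_def intro: range_eqI[of _ _ 0])
  then show ?thesis using i0 y by (simp add: phi_def Least_eq_0)
qed

lemma Oshift: "(\<sigma>^^c) j \<in> Orb \<Longrightarrow> j \<in> I \<Longrightarrow> j \<in> Orb"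
proof -
  assume "(\<sigma>^^c) j \<in> Orb" "j \<in> I"
  then obtain s where s: "(\<sigma>^^c) j = (\<sigma>^^s) i0" by (auto simp: Orb_def)
  have "j = (\<sigma>^^(M * c - c)) ((\<sigma>^^c) j)" using Minv[OF \<open>j \<in> I\<close>] by simp
  also have "\<dots> = (\<sigma>^^(M * c - c + s)) i0" using s by (simp add: funpow_add)
  finally show "j \<in> Orb" by (auto simp: Orb_def)
qed

lemma Ofwd: assumes "j \<in> Orb" shows "(\<sigma>^^c) j \<in> Orb"
proof -
  obtain t where "j = (\<sigma>^^t) i0" using assms by (auto simp: Orb_def)
  then have "(\<sigma>^^c) j = (\<sigma>^^(c+t)) i0" by (simp add: funpow_add)
  then show ?thesis by (simp add: Orb_def)
qed

lemma P2: assumes y: "y \<in> D" and ky: "K i0 r y = y" shows "g (phi y) = phi y"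
proof (rule extensionalityI[where A = I])
  show "g (phi y) \<in> extensional I" using gS[OF phiS[OF y], of 1] by (simp add: PiE_iff)
  show "phi y \<in> extensional I" using phiS[OF y] by (simp add: PiE_iff)
  fix j assume j: "j \<in> I"
  define j0 where "j0 = (\<sigma>^^(M - 1)) j"
  have j0I: "j0 \<in> I" unfolding j0_def using sI[OF j] .
  have sj0: "\<sigma> j0 = j" unfolding j0_def using Mper[OF j] Mpos
    by (metis Suc_diff_1 comp_apply funpow.simps(2))
  have e: "g (phi y) j = h j0 (phi y j0)" using L0[OF phiS[OF y] j0I] sj0 by simp
  show "g (phi y) j = phi y j"
  proof (cases "j0 \<in> Orb")
    case True
    then obtain t where t: "(\<sigma>^^t) i0 = j0" "phi y j0 = K i0 t y" using phiO' by blast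
    have "phi y j = K i0 (Suc t) y" using phiO[OF y ky, of j "Suc t"] t sj0 by simp
    then show ?thesis using e t y by (simp add: compose_def)
  next
    case False
    then have "j \<notin> Orb" using Ofwd unfolding j0_def by blast
    then show ?thesis using e False phinO j j0I L0[OF aS j0I] ga sj0 by simp
  qed
qed

lemma P3: assumes y: "y \<in> D" and ky: "(K i0 r ^^ n) y = y"
  shows "(g^^(r*n)) (phi y) = phi y"
proof (rule extensionalityI[where A = I])
  define m where "m = r * n"
  show "(g^^(r*n)) (phi y) \<in> extensional I" using gS[OF phiS[OF y]] by (simp add: PiE_iff)
  show "phi y \<in> extensional I" using phiS[OF y] by (simp add: PiE_iff)
  fix j assume j: "j \<in> I"
  show "(g^^(r*n)) (phi y) j = phi y j"
  proof (cases "j \<in> Orb")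
    case True
    then obtain t where t: "(\<sigma>^^t) i0 = j" "phi y j = K i0 t y" using phiO' by blast
    have "(\<sigma>^^m) j = (\<sigma>^^t) ((\<sigma>^^m) i0)" using t(1)
      by (metis add.commute comp_apply funpow_add)
    then have mj: "(\<sigma>^^m) j = j" using rmul t(1) unfolding m_def by simp
    have "(g^^m) (phi y) j = (g^^m) (phi y) ((\<sigma>^^m) j)" using mj by simp
    also have "\<dots> = K j m (K i0 t y)" using L1[OF phiS[OF y] j] t by simp
    also have "\<dots> = K i0 (t + m) y" using KA[OF y i0, of t m] t by simp
    also have "\<dots> = K i0 (m + t) y" by (simp add: add.commute)
    also have "\<dots> = K ((\<sigma>^^m) i0) t (K i0 m y)" using KA[OF y i0] .
    also have "\<dots> = K i0 t y" using rmul kpow[OF y] ky unfolding m_def by simp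
    finally show ?thesis using t m_def by simp
  next
    case False
    define j0 where "j0 = (\<sigma>^^(M * m - m)) j"
    have j0I: "j0 \<in> I" unfolding j0_def using sI[OF j] .
    have "(\<sigma>^^m) j0 = (\<sigma>^^(m + (M * m - m))) j" unfolding j0_def by (simp add: funpow_add)
    also have "m + (M * m - m) = M * m" using Mpos by (cases M) auto
    finally have sj0: "(\<sigma>^^m) j0 = j" using Mmul[OF j] by simp
    have j0O: "j0 \<notin> Orb" using Ofwd[of j0 m] False sj0 by auto
    have "(g^^m) (phi y) j = (g^^m) (phi y) ((\<sigma>^^m) j0)" using sj0 by simp
    also have "\<dots> = K j0 m (a j0)" using L1[OF phiS[OF y] j0I] phinO[OF j0I j0O] by simp
    also have "\<dots> = (g^^m) a ((\<sigma>^^m) j0)" using L1[OF aS j0I] by simp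
    also have "\<dots> = a j" using gfix sj0 by simp
    finally show ?thesis using phinO[OF j False] m_def by simp
  qed
qed

lemma part1:
  assumes uniq: "\<forall>b. b \<in> S \<and> g b = b \<longrightarrow> b = a"
    and qs: "\<forall>x\<in>S - {a}. \<forall>n. (g^^n) x = x \<longrightarrow> (\<forall>y\<in>S. (g^^n) y = y)"
  shows "quasi_semiregular D (K i0 r)"
  unfolding quasi_semiregular_def
proof (intro exI[of _ "a i0"] conjI allI impI ballI)
  show ai0: "a i0 \<in> D" using aS i0 by auto
  show "K i0 r (a i0) = a i0" using L1[OF aS i0, of r] gfix r(2) by simp
  fix b assume b: "b \<in> D \<and> K i0 r b = b"
  then have "phi b = a" using uniq P2 phiS by blast
  then show "b = a i0" using phi_i0 b by metis
next
  fix x n y assume x: "x \<in> D - {a i0}" and kx: "(K i0 r ^^ n) x = x" and y: "y \<in> D"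
  have "phi x i0 = x" using phi_i0 x by auto
  then have "phi x \<noteq> a" using x by auto
  then have all: "\<forall>z\<in>S. (g^^(r*n)) z = z" using qs P3[OF _ kx] phiS x by blast
  have "(K i0 r ^^ n) y = K i0 (r*n) (phi y i0)" using kpow[OF y] phi_i0[OF y] by simp
  also have "\<dots> = (g^^(r*n)) (phi y) ((\<sigma>^^(r*n)) i0)" using L1[OF phiS[OF y] i0] by simp
  also have "\<dots> = y" using all phiS[OF y] rmul phi_i0[OF y] by simp
  finally show "(K i0 r ^^ n) y = y" .
qed

lemma part2:
  assumes uniq: "\<forall>b. b \<in> S \<and> g b = b \<longrightarrow> b = a"
    and p: "Factorial_Ring.prime (p::nat)" and gp: "\<forall>x\<in>S. (g^^p) x = x"
    and sne: "\<sigma> i0 \<noteq> i0" and d: "d1 \<in> D" "d2 \<in> D" "d1 \<noteq> d2"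
  shows False
proof -
  have sp: "(\<sigma>^^p) i0 = i0"
  proof (rule ccontr)
    assume ne: "(\<sigma>^^p) i0 \<noteq> i0"
    define j where "j = (\<sigma>^^p) i0"
    have jI: "j \<in> I" unfolding j_def using sI[OF i0] .
    have all: "d = K i0 p (a i0)" if dd: "d \<in> D" for d
    proof -
      define w where "w = a(j := d)"
      have wS: "w \<in> S" using aS jI dd unfolding w_def by (auto simp: PiE_iff extensional_def)
      have "d = w j" unfolding w_def by simp
      also have "\<dots> = (g^^p) w ((\<sigma>^^p) i0)" using gp wS j_def by simp
      also have "\<dots> = K i0 p (w i0)" using L1[OF wS i0] .
      also have "\<dots> = K i0 p (a i0)" using ne unfolding w_def j_def by simp
      finally show ?thesis .
    qed
    show False using all[OF d(1)] all[OF d(2)] d(3) by simp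
  qed
  have "r dvd p" using rdiv[OF sp] .
  moreover have "r \<noteq> 1" using r(2) sne by auto
  ultimately have rp: "r = p" using p unfolding prime_nat_iff by auto
  have kd: "K i0 r y = y" if y: "y \<in> D" for y
  proof -
    have "K i0 r y = K i0 p (phi y i0)" using rp phi_i0[OF y] by simp
    also have "\<dots> = (g^^p) (phi y) ((\<sigma>^^p) i0)" using L1[OF phiS[OF y] i0] by simp
    also have "\<dots> = y" using gp phiS[OF y] sp phi_i0[OF y] by simp
    finally show ?thesis .
  qed
  obtain y where y: "y \<in> D" "y \<noteq> a i0" using d by metis
  have "phi y = a" using uniq P2[OF y(1) kd[OF y(1)]] phiS[OF y(1)] by blast
  then have "phi y i0 = a i0" by simp
  then show False using phi_i0[OF y(1)] y by simp
qed

end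

lemma kpH: assumes "subgroup H (BijGroup D)" "\<And>n. h ((\<sigma>^^n) i) \<in> H"
  shows "kp D h \<sigma> i n \<in> H"
proof (induction n)
  case 0
  have "kp D h \<sigma> i 0 = \<one>\<^bsub>BijGroup D\<^esub>" by (simp only: BG_one kp.simps)
  then show ?case using subgroup.one_closed[OF assms(1)] by metis
next
  case (Suc n)
  have sub: "H \<subseteq> Bij D" using subgroup.subset[OF assms(1)] by (simp only: BG_carrier)
  have "h ((\<sigma>^^n) i) \<otimes>\<^bsub>BijGroup D\<^esub> kp D h \<sigma> i n \<in> H"
    using subgroup.m_closed[OF assms(1) assms(2) Suc] .
  have hb: "h ((\<sigma>^^n) i) \<in> Bij D" using sub assms(2) by blast
  have kb: "kp D h \<sigma> i n \<in> Bij D" using sub Suc by blast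
  have "h ((\<sigma>^^n) i) \<otimes>\<^bsub>BijGroup D\<^esub> kp D h \<sigma> i n = compose D (h ((\<sigma>^^n) i)) (kp D h \<sigma> i n)"
    using hb kb by (rule BG_mult)
  then show ?case using \<open>h ((\<sigma>^^n) i) \<otimes>\<^bsub>BijGroup D\<^esub> kp D h \<sigma> i n \<in> H\<close> by simp
qed

theorem corollary5p3:
  fixes I :: "'i set" and \<Delta> :: "'a set"
    and G :: "(('i \<Rightarrow> 'a) \<Rightarrow> ('i \<Rightarrow> 'a)) set" and H :: "('a \<Rightarrow> 'a) set"
  assumes "PA_type I \<Delta> G"
    and "subgroup H (BijGroup \<Delta>)"
    and "G \<subseteq> wreath_pa I \<Delta> H"
    and "\<exists>g\<in>G. quasi_semiregular (PiE I (\<lambda>_. \<Delta>)) g"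
  shows "(\<exists>h\<in>H. quasi_semiregular \<Delta> h) \<and>
         (\<forall>g\<in>G. quasi_semiregular (PiE I (\<lambda>_. \<Delta>)) g \<and>
                 Factorial_Ring.prime (group.ord (BijGroup (PiE I (\<lambda>_. \<Delta>))) g)
                 \<longrightarrow> g \<in> base_group I \<Delta> H)"
proof -
  let ?S = "PiE I (\<lambda>_. \<Delta>)"
  have finI: "finite I" and finD: "finite \<Delta>" and c2: "card I \<ge> 2"
    and subG: "subgroup G (BijGroup ?S)"
    using assms(1) by (auto simp: PA_type_def)
  have finS: "finite ?S" using finI finD by (simp add: finite_PiE)
  have GB: "G \<subseteq> Bij ?S" using subgroup.subset[OF subG] by (simp only: BG_carrier)
  have HB: "H \<subseteq> Bij \<Delta>" using subgroup.subset[OF assms(2)] by (simp only: BG_carrier)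
  have "I \<noteq> {}" using c2 by auto
  then obtain i1 where i1: "i1 \<in> I" by auto
  have decomp: "\<exists>h \<sigma>. g = pa_perm I \<Delta> h \<sigma> \<and> (\<forall>i\<in>I. h i \<in> H) \<and> \<sigma> \<in> Bij I"
    if "g \<in> G" for g
    using assms(3) that by (auto simp: wreath_pa_def)
  have P1: "\<exists>h\<in>H. quasi_semiregular \<Delta> h"
  proof -
    obtain g where g: "g \<in> G" "quasi_semiregular ?S g" using assms(4) by blast
    obtain h \<sigma> where h: "g = pa_perm I \<Delta> h \<sigma>" "\<forall>i\<in>I. h i \<in> H" "\<sigma> \<in> Bij I"
      using decomp[OF g(1)] by blast
    obtain a where a: "a \<in> ?S" "g a = a" "\<forall>b. b \<in> ?S \<and> g b = b \<longrightarrow> b = a"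
      "\<forall>x\<in>?S - {a}. \<forall>n::nat. (g ^^ n) x = x \<longrightarrow> (\<forall>y\<in>?S. (g ^^ n) y = y)"
      using g(2) unfolding quasi_semiregular_def by blast
    obtain M where M: "M > 0" "\<forall>x\<in>I. (\<sigma>^^M) x = x" using Bij_period[OF finI h(3)] by blast
    interpret pa_loc I \<Delta> h \<sigma> g a i1 M
    proof
      show "\<sigma> \<in> Bij I" by (rule h(3))
      show "\<And>i. i \<in> I \<Longrightarrow> h i \<in> Bij \<Delta>" using h(2) HB by blast
      show "g = pa_perm I \<Delta> h \<sigma>" by (rule h(1))
      show "g \<in> Bij ?S" using GB g(1) by blast
      show "a \<in> ?S" by (rule a(1))
      show "g a = a" by (rule a(2))
      show "i1 \<in> I" by (rule i1)
      show "0 < M" by (rule M(1))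
      show "\<And>x. x \<in> I \<Longrightarrow> (\<sigma>^^M) x = x" using M(2) by blast
    qed
    have "K i1 r \<in> H" by (rule kpH[OF assms(2)]) (use h(2) sI[OF i1] in blast)
    then show ?thesis using part1[OF a(3) a(4)] by blast
  qed
  have P2: "g \<in> base_group I \<Delta> H"
    if g: "g \<in> G" "quasi_semiregular ?S g"
      "Factorial_Ring.prime (group.ord (BijGroup ?S) g)" for g
  proof -
    obtain h \<sigma> where h: "g = pa_perm I \<Delta> h \<sigma>" "\<forall>i\<in>I. h i \<in> H" "\<sigma> \<in> Bij I"
      using decomp[OF g(1)] by blast
    obtain a where a: "a \<in> ?S" "g a = a" "\<forall>b. b \<in> ?S \<and> g b = b \<longrightarrow> b = a"
      using g(2) unfolding quasi_semiregular_def by blast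
    interpret G: group "BijGroup ?S" by (rule group_BijGroup)
    have gc: "g \<in> carrier (BijGroup ?S)" using GB g(1) by (auto simp only: BG_carrier)
    define p where "p = G.ord g"
    have gp: "\<forall>x\<in>?S. (g^^p) x = x"
    proof
      fix x assume x: "x \<in> ?S"
      have gB: "g \<in> Bij ?S" using GB g(1) by blast
      have e: "g [^]\<^bsub>BijGroup ?S\<^esub> p = (\<lambda>x\<in>?S. (g^^p) x)" by (rule Bij_pow[OF gB])
      have o: "\<one>\<^bsub>BijGroup ?S\<^esub> = (\<lambda>x\<in>?S. x)" by (rule BG_one)
      have "g [^]\<^bsub>BijGroup ?S\<^esub> p = \<one>\<^bsub>BijGroup ?S\<^esub>"
        unfolding p_def by (rule G.pow_ord_eq_1[OF gc])
      then have "(\<lambda>x\<in>?S. (g^^p) x) = (\<lambda>x\<in>?S. x)" using e o by simp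
      then have "(\<lambda>x\<in>?S. (g^^p) x) x = (\<lambda>x\<in>?S. x) x" by (rule arg_cong)
      then show "(g^^p) x = x" using x by (simp only: restrict_apply' x)
    qed
    show ?thesis
    proof (cases "\<forall>i\<in>I. \<sigma> i = i")
      case True
      have "\<sigma> = (\<lambda>i\<in>I. i)"
        by (rule extensionalityI[where A = I]) (use True Bij_imp_extensional[OF h(3)] in auto)
      then show ?thesis using h by (auto simp: base_group_def)
    next
      case False
      then obtain i0 where io: "i0 \<in> I" "\<sigma> i0 \<noteq> i0" by auto
      show ?thesis
      proof (cases "\<exists>d1\<in>\<Delta>. \<exists>d2\<in>\<Delta>. d1 \<noteq> d2")
        case True
        then obtain d1 d2 where d: "d1 \<in> \<Delta>" "d2 \<in> \<Delta>" "d1 \<noteq> d2" by blast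
        obtain M where M: "M > 0" "\<forall>x\<in>I. (\<sigma>^^M) x = x" using Bij_period[OF finI h(3)] by blast
        interpret pa_loc I \<Delta> h \<sigma> g a i0 M
        proof
      show "\<sigma> \<in> Bij I" by (rule h(3))
      show "\<And>i. i \<in> I \<Longrightarrow> h i \<in> Bij \<Delta>" using h(2) HB by blast
      show "g = pa_perm I \<Delta> h \<sigma>" by (rule h(1))
      show "g \<in> Bij ?S" using GB g(1) by blast
      show "a \<in> ?S" by (rule a(1))
      show "g a = a" by (rule a(2))
      show "i0 \<in> I" by (rule io(1))
      show "0 < M" by (rule M(1))
      show "\<And>x. x \<in> I \<Longrightarrow> (\<sigma>^^M) x = x" using M(2) by blast
    qed
        have False using part2[OF a(3) _ gp io(2) d] g(3) unfolding p_def by blast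
        then show ?thesis ..
      next
        case False
        have xa: "x = a" if x: "x \<in> ?S" for x
          by (rule extensionalityI[where A = I]) (use x a(1) False in \<open>auto simp: PiE_iff\<close>)
        have "g = (\<lambda>x\<in>?S. x)"
          by (rule extensionalityI[where A = ?S]) (use GB g(1) Bij_imp_extensional xa a(2) in auto)
        then have "g = \<one>\<^bsub>BijGroup ?S\<^esub>" by (simp only: BG_one)
        then have "G.ord g = 1" by simp
        then show ?thesis using g(3) by simp
      qed
    qed
  qed
  show ?thesis using P1 P2 by blast
qed

end
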